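(* In any concurrent run of the Block-STM algorithm (described in the context) on a block of $n$ transactions, if a thread joins after invoking the $\mathtt{run}$ procedure, then all transactions $tx_0,\dots,tx_{n-1}$ are globally committed at that time.
   Context: Model: threads perform atomic operations that appear to take place in a single global order; a "time" is a point in this order. Locks protect per-transaction status and dependency sets. Problem. A block is a sequence of transactions $tx_0,\dots,tx_{n-1}$ ($n=\mathtt{BLOCK.size()}$), each a deterministic program reading and writing memory locations. Shared state. MVMemory: a map $\mathit{data}$ from $(\text{location},\text{txn index})$ to (incarnation number, value) or a marker ESTIMATE; arrays $\mathit{last\_written\_locations}[j]$, $\mathit{last\_read\_set}[j]$, accessed atomically. A version is $(j,i)$. Scheduler: atomic counters $\mathit{execution\_idx}=0$, $\mathit{validation\_idx}=0$, $\mathit{decrease\_cnt}=0$, $\mathit{num\_active\_tasks}=0$, flag $\mathit{done\_marker}=$false; lock-protected $\mathit{txn\_status}[j]=(\text{incarnation},\text{status})$, initially $(0,\mathtt{READY\_TO\_EXECUTE})$, status $\in\{\mathtt{READY\_TO\_EXECUTE},\mathtt{EXECUTING},\mathtt{EXECUTED},\mathtt{ABORTING}\}$; lock-protected dependency sets $\mathit{txn\_dependency}[j]$, initially empty. MVMemory operations. $\mathtt{read}(p,j)$: largest $k<j$ with an entry $(p,k)$; none: NOT_FOUND; ESTIMATE: READ_ERROR with blocking index $k$; else OK with version and value. $\mathtt{record}((j,i),R,W)$: write $\mathit{data}[(p,j)]:=(i,v)$ for $(p,v)\in W$, remove entries $(p,j)$ of previously written but not rewritten locations, update $\mathit{last\_written\_locations}[j]$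 and $\mathit{last\_read\_set}[j]:=R$, return whether a new location was written. $\mathtt{convert\_writes\_to\_estimates}(j)$ sets all entries $(p,j)$ with $p\in\mathit{last\_written\_locations}[j]$ to ESTIMATE. $\mathtt{validate\_read\_set}(j)$ returns true iff re-reading each recorded location with $\mathtt{read}(p,j)$ gives the same recorded version (NOT_FOUND for $\bot$) and no READ_ERROR. VM.execute($j$) runs $tx_j$ locally, reading own writes, else $\mathtt{read}(p,j)$ (NOT_FOUND: read initial storage, record $(p,\bot)$; OK: record version; READ_ERROR: stop, return blocking index); never writes shared memory. Scheduler. $\mathtt{decrease\_execution\_idx}(t)$/$\mathtt{decrease\_validation\_idx}(t)$: index $:=\min(\text{index},t)$, then increment $\mathit{decrease\_cnt}$. $\mathtt{try\_incarnate}(k)$: if $k<n$ and $tx_k$'s status is $\mathtt{READY\_TO\_EXECUTE}$ (incarnation $i$), set $\mathtt{EXECUTING}$, return $(k,i)$; else decrement $\mathit{num\_active\_tasks}$, return none. $\mathtt{next\_task}$: if $\mathit{validation\_idx}<\mathit{execution\_idx}$: if $\mathit{validation\_idx}\ge n$, call check_done, return none; else increment $\mathit{num\_active\_tasks}$, fetch-and-increment $\mathit{validation\_idx}$ obtaining $k$; if $k<n$ and $tx_k$'s status is $\mathtt{EXECUTED}$ (incarnation $i$) return validation task $(k,i)$, else decrement $\mathit{num\_active\_tasks}$. Otherwise: if $\mathit{execution\_idx}\ge n$ call check_done, return none; else increment $\mathit{num\_active\_tasks}$, fetch-and-increment $\mathit{execution\_idx}$ obtaining $k$, return $\mathtt{try\_incarnate}(k)$.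 $\mathtt{check\_done}$: read $c:=\mathit{decrease\_cnt}$, then if $\min(\mathit{execution\_idx},\mathit{validation\_idx})\ge n$, then $\mathit{num\_active\_tasks}=0$, then $\mathit{decrease\_cnt}=c$, set $\mathit{done\_marker}:=$true. Execution task $(k,i)$: run VM.execute($k$). On READ_ERROR with blocking $b$: under lock of $\mathit{txn\_dependency}[b]$, if $tx_b$'s status is $\mathtt{EXECUTED}$ retry execution; else set $tx_k$'s status $\mathtt{ABORTING}$, add $k$ to $\mathit{txn\_dependency}[b]$, release, decrement $\mathit{num\_active\_tasks}$. Otherwise $w:=\mathtt{record}(\dots)$; set status $\mathtt{EXECUTED}$; swap out $\mathit{txn\_dependency}[k]$, set each dependent $d$ to $(\text{incarnation}+1,\mathtt{READY\_TO\_EXECUTE})$ and if any, $\mathtt{decrease\_execution\_idx}$(min dependent); if $\mathit{validation\_idx}>k$: if $w$, $\mathtt{decrease\_validation\_idx}(k)$, else return validation task $(k,i)$ keeping $\mathit{num\_active\_tasks}$; if no task returned, decrement $\mathit{num\_active\_tasks}$. Validation task $(k,i)$: if $\mathtt{validate\_read\_set}(k)$ fails and under lock $\mathit{txn\_status}[k]=(i,\mathtt{EXECUTED})$, set $\mathtt{ABORTING}$ (aborted). If aborted: convert writes of $k$ to ESTIMATE; $\mathit{txn\_status}[k]:=(i+1,\mathtt{READY\_TO\_EXECUTE})$; $\mathtt{decrease\_validation\_idx}(k+1)$; if $\mathit{execution\_idx}>k$ and $\mathtt{try\_incarnate}(k)$ returns a version, return that execution task keeping $\mathit{num\_active\_tasks}$.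 Otherwise decrement $\mathit{num\_active\_tasks}$. $\mathtt{run}$: while $\mathit{done\_marker}$ is false, perform the task in hand or obtain one via next_task. A thread joins when it returns from $\mathtt{run}$. Intervals. Pre-validation of $tx_j$: from a fetch-and-increment of $\mathit{validation\_idx}$ returning $j$ until just before the corresponding decrement in next_task or just before the validation task is returned. Execution of $(j,i)$: from setting $tx_j$'s status to $\mathtt{EXECUTING}$ (incarnation $i$) until its abort via the dependency mechanism, or just before its final decrement of $\mathit{num\_active\_tasks}$, or just before it returns a validation task. Validation of $(j,i)$: from handing the task to a thread until just before its final decrement or just before it returns an execution task. Global commit index at time $T$: minimum of $\mathit{validation\_idx}$, all $j$ with status not $\mathtt{EXECUTED}$, indices with ongoing pre-validation, and indices of versions with ongoing execution or validation. $tx_0,\dots,tx_k$ are globally committed at $T$ if this index exceeds $k$. *)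

theory Defs
  imports Main
begin

text \<open>
  A transaction is a deterministic program over locations 'l and values 'v.
  Its next instruction is a function of the history of results of the
  instructions already executed (None for a write, Some v for a read).
  Transaction j of the block is  prog j ; the block size is n.
\<close>

datatype ('l, 'v) instr = IRead 'l | IWrite 'l 'v | IDone

datatype tstatus = READY_TO_EXECUTE | EXECUTING | EXECUTED | ABORTING

datatype 'v entry = Written nat 'v  \<comment> \<open>(incarnation, value)\<close>
                  | ESTIMATE

datatype 'v read_result = NOT_FOUND | OK "nat \<times> nat" 'v | READ_ERROR nat

datatype task = ExecT nat nat | ValT nat nat

fun task_idx :: "task \<Rightarrow> nat" where
  "task_idx (ExecT k i) = k"
| "task_idx (ValT k i) = k"

text \<open>Shared state (MVMemory and scheduler).  Versions are pairs (txn index, incarnation).\<close>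

record ('l, 'v) gst =
  g_data   :: "'l \<times> nat \<Rightarrow> 'v entry option"
  g_lw     :: "nat \<Rightarrow> 'l list"                            \<comment> \<open>last_written_locations\<close>
  g_lr     :: "nat \<Rightarrow> ('l \<times> (nat \<times> nat) option) list"  \<comment> \<open>last_read_set; None = \<bottom>\<close>
  g_eidx   :: nat        \<comment> \<open>execution_idx\<close>
  g_vidx   :: nat        \<comment> \<open>validation_idx\<close>
  g_dcnt   :: nat        \<comment> \<open>decrease_cnt\<close>
  g_nact   :: int        \<comment> \<open>num_active_tasks\<close>
  g_done   :: bool       \<comment> \<open>done_marker\<close>
  g_status :: "nat \<Rightarrow> nat \<times> tstatus"   \<comment> \<open>txn_status\<close>
  g_deps   :: "nat \<Rightarrow> nat set"         \<comment> \<open>txn_dependency\<close>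

definition mv_read :: "('l \<times> nat \<Rightarrow> 'v entry option) \<Rightarrow> 'l \<Rightarrow> nat \<Rightarrow> 'v read_result" where
  "mv_read d p j =
     (let ks = {k. k < j \<and> d (p, k) \<noteq> None} in
      if ks = {} then NOT_FOUND
      else (let k = Max ks in
            case d (p, k) of
              Some ESTIMATE \<Rightarrow> READ_ERROR k
            | Some (Written i v) \<Rightarrow> OK (k, i) v
            | None \<Rightarrow> NOT_FOUND))"

text \<open>Thread-local control state (program counter plus local variables).
  Each transition of a thread performs at most one atomic shared-memory operation
  (or one critical section under a lock).\<close>

datatype ('l, 'v) tst =
    Loop "task option"           \<comment> \<open>top of the run loop, with the task in hand\<close>
  | Joined "task option"         \<comment> \<open>returned from run\<close>
  \<comment> \<open>next_task\<close>
  | NT_V | NT_E nat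
  | NV_Chk | NV_Inc | NV_Fai | NV_Status nat | NV_Dec nat
  | NE_Chk | NE_Inc | NE_Fai | NE_TI nat | NE_TIDec
  \<comment> \<open>check_done\<close>
  | CD1 | CD2 nat | CD3 nat nat | CD4 nat | CD5 nat | CD6
  \<comment> \<open>execution task: VM.execute (read set, local write map, written locations, history)\<close>
  | EX_Run nat nat "('l \<times> (nat \<times> nat) option) list" "'l \<Rightarrow> 'v option" "'l list" "'v option list"
  | EX_Dep nat nat nat | EX_AbortDec
  \<comment> \<open>record\<close>
  | REC_W nat nat "('l \<times> (nat \<times> nat) option) list" "('l \<times> 'v) list" "('l \<times> 'v) list"
  | REC_Prev nat nat "('l \<times> (nat \<times> nat) option) list" "('l \<times> 'v) list"
  | REC_Rm nat nat "('l \<times> (nat \<times> nat) option) list" "('l \<times> 'v) list" bool "'l list"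
  | REC_LW nat nat "('l \<times> (nat \<times> nat) option) list" "('l \<times> 'v) list" bool
  | REC_LR nat nat "('l \<times> (nat \<times> nat) option) list" bool
  \<comment> \<open>rest of the execution task\<close>
  | FE_Status nat nat bool | FE_Swap nat nat bool
  | FE_Res nat nat bool "nat list" "nat option"
  | FE_DecE nat nat bool nat | FE_CntE nat nat bool | FE_VI nat nat bool
  | FE_DecV nat nat | FE_CntV nat nat | FE_Dec nat nat
  \<comment> \<open>validation task\<close>
  | VA_Start nat nat | VA_Chk nat nat "('l \<times> (nat \<times> nat) option) list"
  | VA_Abort nat nat | VA_ConvStart nat nat | VA_Conv nat nat "'l list"
  | VA_Ready nat nat | VA_DecV nat nat | VA_Cnt nat nat | VA_EI nat nat
  | VA_TI nat nat | VA_TIDec nat nat | VA_Dec nat nat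

text \<open>One atomic step of a thread, given block size n, transactions prog and initial storage init.
  None means the thread cannot step (it has joined).\<close>

fun step1 :: "nat \<Rightarrow> (nat \<Rightarrow> 'v option list \<Rightarrow> ('l, 'v) instr) \<Rightarrow> ('l \<Rightarrow> 'v)
    \<Rightarrow> ('l, 'v) gst \<Rightarrow> ('l, 'v) tst \<Rightarrow> (('l, 'v) gst \<times> ('l, 'v) tst) option" where
  "step1 n prog init g (Loop t) =
     (if g_done g then Some (g, Joined t)
      else (case t of
              None \<Rightarrow> Some (g, NT_V)
            | Some (ExecT k i) \<Rightarrow> Some (g, EX_Run k i [] Map.empty [] [])
            | Some (ValT k i) \<Rightarrow> Some (g, VA_Start k i)))"
| "step1 n prog init g (Joined t) = None"
  \<comment> \<open>next_task: compare validation_idx < execution_idx (two atomic loads)\<close>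
| "step1 n prog init g NT_V = Some (g, NT_E (g_vidx g))"
| "step1 n prog init g (NT_E v) = (if v < g_eidx g then Some (g, NV_Chk) else Some (g, NE_Chk))"
| "step1 n prog init g NV_Chk = (if g_vidx g \<ge> n then Some (g, CD1) else Some (g, NV_Inc))"
| "step1 n prog init g NV_Inc = Some (g\<lparr>g_nact := g_nact g + 1\<rparr>, NV_Fai)"
| "step1 n prog init g NV_Fai = Some (g\<lparr>g_vidx := g_vidx g + 1\<rparr>, NV_Status (g_vidx g))"
| "step1 n prog init g (NV_Status k) =
     (if k < n \<and> snd (g_status g k) = EXECUTED
      then Some (g, Loop (Some (ValT k (fst (g_status g k)))))
      else Some (g, NV_Dec k))"
| "step1 n prog init g (NV_Dec k) = Some (g\<lparr>g_nact := g_nact g - 1\<rparr>, Loop None)"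
| "step1 n prog init g NE_Chk = (if g_eidx g \<ge> n then Some (g, CD1) else Some (g, NE_Inc))"
| "step1 n prog init g NE_Inc = Some (g\<lparr>g_nact := g_nact g + 1\<rparr>, NE_Fai)"
| "step1 n prog init g NE_Fai = Some (g\<lparr>g_eidx := g_eidx g + 1\<rparr>, NE_TI (g_eidx g))"
| "step1 n prog init g (NE_TI k) =
     (if k < n \<and> snd (g_status g k) = READY_TO_EXECUTE
      then Some (g\<lparr>g_status := (g_status g)(k := (fst (g_status g k), EXECUTING))\<rparr>,
                 Loop (Some (ExecT k (fst (g_status g k)))))
      else Some (g, NE_TIDec))"
| "step1 n prog init g NE_TIDec = Some (g\<lparr>g_nact := g_nact g - 1\<rparr>, Loop None)"
| "step1 n prog init g CD1 = Some (g, CD2 (g_dcnt g))"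
| "step1 n prog init g (CD2 c) = Some (g, CD3 c (g_eidx g))"
| "step1 n prog init g (CD3 c e) =
     (if min e (g_vidx g) \<ge> n then Some (g, CD4 c) else Some (g, Loop None))"
| "step1 n prog init g (CD4 c) = (if g_nact g = 0 then Some (g, CD5 c) else Some (g, Loop None))"
| "step1 n prog init g (CD5 c) = (if g_dcnt g = c then Some (g, CD6) else Some (g, Loop None))"
| "step1 n prog init g CD6 = Some (g\<lparr>g_done := True\<rparr>, Loop None)"
| "step1 n prog init g (EX_Run k i rs ws wl h) =
     (case prog k h of
        IDone \<Rightarrow> (let W = map (\<lambda>l. (l, the (ws l))) wl in Some (g, REC_W k i rs W W))
      | IWrite l v \<Rightarrow>
          Some (g, EX_Run k i rs (ws(l \<mapsto> v)) (if l \<in> set wl then wl else wl @ [l]) (h @ [None]))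
      | IRead l \<Rightarrow>
          (case ws l of
             Some v \<Rightarrow> Some (g, EX_Run k i rs ws wl (h @ [Some v]))
           | None \<Rightarrow>
              (case mv_read (g_data g) l k of
                 NOT_FOUND \<Rightarrow> Some (g, EX_Run k i (rs @ [(l, None)]) ws wl (h @ [Some (init l)]))
               | OK ver v \<Rightarrow> Some (g, EX_Run k i (rs @ [(l, Some ver)]) ws wl (h @ [Some v]))
               | READ_ERROR b \<Rightarrow> Some (g, EX_Dep k i b))))"
  \<comment> \<open>add_dependency (critical section under the lock of txn_dependency[b])\<close>
| "step1 n prog init g (EX_Dep k i b) =
     (if snd (g_status g b) = EXECUTED then Some (g, EX_Run k i [] Map.empty [] [])
      else Some (g\<lparr>g_status := (g_status g)(k := (fst (g_status g k), ABORTING)),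
                   g_deps := (g_deps g)(b := insert k (g_deps g b))\<rparr>, EX_AbortDec))"
| "step1 n prog init g EX_AbortDec = Some (g\<lparr>g_nact := g_nact g - 1\<rparr>, Loop None)"
| "step1 n prog init g (REC_W k i R W todo) =
     (case todo of
        [] \<Rightarrow> Some (g, REC_Prev k i R W)
      | (p, v) # rest \<Rightarrow> Some (g\<lparr>g_data := (g_data g)((p, k) := Some (Written i v))\<rparr>, REC_W k i R W rest))"
| "step1 n prog init g (REC_Prev k i R W) =
     (let prev = g_lw g k; new = map fst W in
      Some (g, REC_Rm k i R W (\<exists>p\<in>set new. p \<notin> set prev) (filter (\<lambda>p. p \<notin> set new) prev)))"
| "step1 n prog init g (REC_Rm k i R W w rm) =
     (case rm of
        [] \<Rightarrow> Some (g, REC_LW k i R W w)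
      | p # rest \<Rightarrow> Some (g\<lparr>g_data := (g_data g)((p, k) := None)\<rparr>, REC_Rm k i R W w rest))"
| "step1 n prog init g (REC_LW k i R W w) =
     Some (g\<lparr>g_lw := (g_lw g)(k := map fst W)\<rparr>, REC_LR k i R w)"
| "step1 n prog init g (REC_LR k i R w) =
     Some (g\<lparr>g_lr := (g_lr g)(k := R)\<rparr>, FE_Status k i w)"
| "step1 n prog init g (FE_Status k i w) =
     Some (g\<lparr>g_status := (g_status g)(k := (fst (g_status g k), EXECUTED))\<rparr>, FE_Swap k i w)"
| "step1 n prog init g (FE_Swap k i w) =
     (let D = g_deps g k in
      Some (g\<lparr>g_deps := (g_deps g)(k := {})\<rparr>,
            FE_Res k i w (sorted_list_of_set D) (if D = {} then None else Some (Min D))))"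
| "step1 n prog init g (FE_Res k i w ds mn) =
     (case ds of
        [] \<Rightarrow> (case mn of None \<Rightarrow> Some (g, FE_VI k i w) | Some m \<Rightarrow> Some (g, FE_DecE k i w m))
      | d # rest \<Rightarrow>
          Some (g\<lparr>g_status := (g_status g)(d := (fst (g_status g d) + 1, READY_TO_EXECUTE))\<rparr>,
                FE_Res k i w rest mn))"
| "step1 n prog init g (FE_DecE k i w m) =
     Some (g\<lparr>g_eidx := min (g_eidx g) m\<rparr>, FE_CntE k i w)"
| "step1 n prog init g (FE_CntE k i w) = Some (g\<lparr>g_dcnt := g_dcnt g + 1\<rparr>, FE_VI k i w)"
| "step1 n prog init g (FE_VI k i w) =
     (if g_vidx g > k then
        (if w then Some (g, FE_DecV k i) else Some (g, Loop (Some (ValT k i))))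
      else Some (g, FE_Dec k i))"
| "step1 n prog init g (FE_DecV k i) = Some (g\<lparr>g_vidx := min (g_vidx g) k\<rparr>, FE_CntV k i)"
| "step1 n prog init g (FE_CntV k i) = Some (g\<lparr>g_dcnt := g_dcnt g + 1\<rparr>, FE_Dec k i)"
| "step1 n prog init g (FE_Dec k i) = Some (g\<lparr>g_nact := g_nact g - 1\<rparr>, Loop None)"
| "step1 n prog init g (VA_Start k i) = Some (g, VA_Chk k i (g_lr g k))"
| "step1 n prog init g (VA_Chk k i R) =
     (case R of
        [] \<Rightarrow> Some (g, VA_Dec k i)
      | (p, ver) # rest \<Rightarrow>
          (let ok = (case mv_read (g_data g) p k of
                       NOT_FOUND \<Rightarrow> ver = None
                     | OK ver' v \<Rightarrow> ver = Some ver'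
                     | READ_ERROR b \<Rightarrow> False)
           in if ok then Some (g, VA_Chk k i rest) else Some (g, VA_Abort k i)))"
| "step1 n prog init g (VA_Abort k i) =
     (if g_status g k = (i, EXECUTED)
      then Some (g\<lparr>g_status := (g_status g)(k := (i, ABORTING))\<rparr>, VA_ConvStart k i)
      else Some (g, VA_Dec k i))"
| "step1 n prog init g (VA_ConvStart k i) = Some (g, VA_Conv k i (g_lw g k))"
| "step1 n prog init g (VA_Conv k i L) =
     (case L of
        [] \<Rightarrow> Some (g, VA_Ready k i)
      | p # rest \<Rightarrow> Some (g\<lparr>g_data := (g_data g)((p, k) := Some ESTIMATE)\<rparr>, VA_Conv k i rest))"
| "step1 n prog init g (VA_Ready k i) =
     Some (g\<lparr>g_status := (g_status g)(k := (i + 1, READY_TO_EXECUTE))\<rparr>, VA_DecV k i)"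
| "step1 n prog init g (VA_DecV k i) = Some (g\<lparr>g_vidx := min (g_vidx g) (k + 1)\<rparr>, VA_Cnt k i)"
| "step1 n prog init g (VA_Cnt k i) = Some (g\<lparr>g_dcnt := g_dcnt g + 1\<rparr>, VA_EI k i)"
| "step1 n prog init g (VA_EI k i) = (if g_eidx g > k then Some (g, VA_TI k i) else Some (g, VA_Dec k i))"
| "step1 n prog init g (VA_TI k i) =
     (if k < n \<and> snd (g_status g k) = READY_TO_EXECUTE
      then Some (g\<lparr>g_status := (g_status g)(k := (fst (g_status g k), EXECUTING))\<rparr>,
                 Loop (Some (ExecT k (fst (g_status g k)))))
      else Some (g, VA_TIDec k i))"
| "step1 n prog init g (VA_TIDec k i) = Some (g\<lparr>g_nact := g_nact g - 1\<rparr>, Loop None)"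
| "step1 n prog init g (VA_Dec k i) = Some (g\<lparr>g_nact := g_nact g - 1\<rparr>, Loop None)"

type_synonym ('l, 'v, 't) conf = "('l, 'v) gst \<times> ('t \<Rightarrow> ('l, 'v) tst)"

definition init_gst :: "('l, 'v) gst" where
  "init_gst = \<lparr>g_data = (\<lambda>_. None), g_lw = (\<lambda>_. []), g_lr = (\<lambda>_. []),
               g_eidx = 0, g_vidx = 0, g_dcnt = 0, g_nact = 0, g_done = False,
               g_status = (\<lambda>_. (0, READY_TO_EXECUTE)), g_deps = (\<lambda>_. {})\<rparr>"

definition init_conf :: "('l, 'v, 't) conf" where
  "init_conf = (init_gst, (\<lambda>_. Loop None))"

definition bstep :: "nat \<Rightarrow> (nat \<Rightarrow> 'v option list \<Rightarrow> ('l, 'v) instr) \<Rightarrow> ('l \<Rightarrow> 'v)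
    \<Rightarrow> 't \<Rightarrow> ('l, 'v, 't) conf \<Rightarrow> ('l, 'v, 't) conf \<Rightarrow> bool" where
  "bstep n prog init t C C' \<longleftrightarrow>
     (\<exists>g' l'. step1 n prog init (fst C) (snd C t) = Some (g', l') \<and> C' = (g', (snd C)(t := l')))"

definition reachable :: "nat \<Rightarrow> (nat \<Rightarrow> 'v option list \<Rightarrow> ('l, 'v) instr) \<Rightarrow> ('l \<Rightarrow> 'v)
    \<Rightarrow> ('l, 'v, 't) conf \<Rightarrow> bool" where
  "reachable n prog init C \<longleftrightarrow> (\<lambda>C C'. \<exists>t. bstep n prog init t C C')\<^sup>*\<^sup>* init_conf C"

fun is_joined :: "('l, 'v) tst \<Rightarrow> bool" where
  "is_joined (Joined t) = True"
| "is_joined _ = False"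

text \<open>Index of the ongoing pre-validation / execution / validation interval of a thread, if any.\<close>
fun ongoing :: "('l, 'v) tst \<Rightarrow> nat option" where
  "ongoing (Loop t) = map_option task_idx t"
| "ongoing (Joined t) = map_option task_idx t"
| "ongoing (NV_Status k) = Some k"
| "ongoing (NV_Dec k) = Some k"
| "ongoing (EX_Run k i rs ws wl h) = Some k"
| "ongoing (EX_Dep k i b) = Some k"
| "ongoing (REC_W k i R W todo) = Some k"
| "ongoing (REC_Prev k i R W) = Some k"
| "ongoing (REC_Rm k i R W w rm) = Some k"
| "ongoing (REC_LW k i R W w) = Some k"
| "ongoing (REC_LR k i R w) = Some k"
| "ongoing (FE_Status k i w) = Some k"
| "ongoing (FE_Swap k i w) = Some k"
| "ongoing (FE_Res k i w ds mn) = Some k"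
| "ongoing (FE_DecE k i w m) = Some k"
| "ongoing (FE_CntE k i w) = Some k"
| "ongoing (FE_VI k i w) = Some k"
| "ongoing (FE_DecV k i) = Some k"
| "ongoing (FE_CntV k i) = Some k"
| "ongoing (FE_Dec k i) = Some k"
| "ongoing (VA_Start k i) = Some k"
| "ongoing (VA_Chk k i R) = Some k"
| "ongoing (VA_Abort k i) = Some k"
| "ongoing (VA_ConvStart k i) = Some k"
| "ongoing (VA_Conv k i L) = Some k"
| "ongoing (VA_Ready k i) = Some k"
| "ongoing (VA_DecV k i) = Some k"
| "ongoing (VA_Cnt k i) = Some k"
| "ongoing (VA_EI k i) = Some k"
| "ongoing (VA_TI k i) = Some k"
| "ongoing (VA_TIDec k i) = Some k"
| "ongoing (VA_Dec k i) = Some k"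
| "ongoing _ = None"

definition global_commit_index :: "nat \<Rightarrow> ('l, 'v, 't) conf \<Rightarrow> nat" where
  "global_commit_index n C =
     Inf ({g_vidx (fst C)}
          \<union> {j. j < n \<and> snd (g_status (fst C) j) \<noteq> EXECUTED}
          \<union> {j. \<exists>t. ongoing (snd C t) = Some j})"

definition globally_committed :: "nat \<Rightarrow> ('l, 'v, 't) conf \<Rightarrow> nat \<Rightarrow> bool" where
  "globally_committed n C k \<longleftrightarrow> global_commit_index n C > k"

end

theory Submission
  imports Defs
begin


fun act :: "('l,'v) tst \<Rightarrow> bool" where
  "act (Loop None) = False" | "act (Joined None) = False" | "act NT_V = False"
| "act (NT_E v) = False" | "act NV_Chk = False" | "act NV_Inc = False"
| "act NE_Chk = False" | "act NE_Inc = False" | "act CD1 = False" | "act (CD2 c) = False"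
| "act (CD3 c e) = False" | "act (CD4 c) = False" | "act (CD5 c) = False" | "act CD6 = False"
| "act _ = True"

fun hl :: "nat \<Rightarrow> ('l,'v) tst \<Rightarrow> bool" where
  "hl n (Loop None) = True" | "hl n (Joined None) = True" | "hl n NT_V = True"
| "hl n (NT_E v) = True" | "hl n NV_Chk = True" | "hl n NV_Inc = True" | "hl n NV_Fai = True"
| "hl n (NV_Status k) = (n \<le> k)" | "hl n (NV_Dec k) = (n \<le> k)"
| "hl n NE_Chk = True" | "hl n NE_Inc = True" | "hl n NE_Fai = True"
| "hl n (NE_TI k) = (n \<le> k)" | "hl n NE_TIDec = True"
| "hl n CD1 = True" | "hl n (CD2 c) = True"
| "hl n (CD3 c e) = True" | "hl n (CD4 c) = True" | "hl n (CD5 c) = True" | "hl n CD6 = True"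
| "hl n _ = False"

fun rr :: "('l,'v) tst \<Rightarrow> nat \<Rightarrow> bool" where
  "rr (NE_TI k) j = (k = j)"
| "rr (FE_Res k i w ds (Some m)) j = (m \<le> j)"
| "rr (FE_DecE k i w m) j = (m \<le> j)"
| "rr (VA_DecV k i) j = (k = j)"
| "rr (VA_Cnt k i) j = (k = j)"
| "rr (VA_EI k i) j = (k = j)"
| "rr (VA_TI k i) j = (k = j)"
| "rr _ _ = False"

fun re :: "('l,'v) tst \<Rightarrow> nat \<Rightarrow> bool" where
  "re (Loop (Some (ExecT k i))) j = (k = j)"
| "re (EX_Run k i rs ws wl h) j = (k = j)"
| "re (EX_Dep k i b) j = (k = j)"
| "re (REC_W k i R W todo) j = (k = j)"
| "re (REC_Prev k i R W) j = (k = j)"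
| "re (REC_Rm k i R W w rm) j = (k = j)"
| "re (REC_LW k i R W w) j = (k = j)"
| "re (REC_LR k i R w) j = (k = j)"
| "re (FE_Status k i w) j = (k = j)"
| "re _ _ = False"

fun ra :: "(nat \<Rightarrow> nat set) \<Rightarrow> ('l,'v) tst \<Rightarrow> nat \<Rightarrow> bool" where
  "ra D (VA_ConvStart k i) j = (k = j)"
| "ra D (VA_Conv k i L) j = (k = j)"
| "ra D (VA_Ready k i) j = (k = j)"
| "ra D (FE_Swap k i w) j = (j \<in> D k)"
| "ra D (FE_Res k i w ds mn) j = (j \<in> set ds)"
| "ra D _ _ = False"

fun loc :: "('l,'v) tst \<Rightarrow> bool" where
  "loc (EX_Dep k i b) = (b < k)"
| "loc (FE_Res k i w ds mn) = (\<forall>d\<in>set ds. \<exists>m. mn = Some m \<and> m \<le> d)"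
| "loc _ = True"

fun pe :: "('l,'v) tst \<Rightarrow> bool" where
  "pe (FE_CntE k i w) = True" | "pe _ = False"

fun pv :: "('l,'v) tst \<Rightarrow> bool" where
  "pv (FE_CntV k i) = True" | "pv (VA_Cnt k i) = True" | "pv _ = False"

definition Safe :: "nat \<Rightarrow> ('l,'v) gst \<Rightarrow> ('t \<Rightarrow> ('l,'v) tst) \<Rightarrow> bool" where
  "Safe n g ls \<longleftrightarrow> n \<le> g_eidx g \<and> n \<le> g_vidx g \<and> (\<forall>j<n. snd (g_status g j) = EXECUTED)
     \<and> (\<forall>x. hl n (ls x))"

fun cdi :: "nat \<Rightarrow> ('l,'v) gst \<Rightarrow> ('t \<Rightarrow> ('l,'v) tst) \<Rightarrow> ('l,'v) tst \<Rightarrow> bool" where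
  "cdi n g ls (CD2 c) = (c \<le> g_dcnt g)"
| "cdi n g ls (CD3 c e) = (c \<le> g_dcnt g \<and> (g_dcnt g = c \<longrightarrow> e \<le> g_eidx g \<or> (\<exists>y. pe (ls y))))"
| "cdi n g ls (CD4 c) = (c \<le> g_dcnt g \<and> (g_dcnt g = c \<longrightarrow> (n \<le> g_eidx g \<or> (\<exists>y. pe (ls y)))
                                                    \<and> (n \<le> g_vidx g \<or> (\<exists>y. pv (ls y)))))"
| "cdi n g ls (CD5 c) = (c \<le> g_dcnt g \<and> (g_dcnt g = c \<longrightarrow> Safe n g ls))"
| "cdi n g ls CD6 = Safe n g ls"
| "cdi n g ls _ = True"

definition IR :: "nat \<Rightarrow> ('l,'v) gst \<Rightarrow> ('t \<Rightarrow> ('l,'v) tst) \<Rightarrow> bool" where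
  "IR n g ls \<longleftrightarrow> (\<forall>j<n. snd (g_status g j) = READY_TO_EXECUTE \<longrightarrow> g_eidx g \<le> j \<or> (\<exists>x. rr (ls x) j))"
definition IE :: "nat \<Rightarrow> ('l,'v) gst \<Rightarrow> ('t \<Rightarrow> ('l,'v) tst) \<Rightarrow> bool" where
  "IE n g ls \<longleftrightarrow> (\<forall>j<n. snd (g_status g j) = EXECUTING \<longrightarrow> (\<exists>x. re (ls x) j))"
definition IA :: "nat \<Rightarrow> ('l,'v) gst \<Rightarrow> ('t \<Rightarrow> ('l,'v) tst) \<Rightarrow> bool" where
  "IA n g ls \<longleftrightarrow> (\<forall>j<n. snd (g_status g j) = ABORTING \<longrightarrow>
      (\<exists>x. ra (g_deps g) (ls x) j) \<or> (\<exists>b<j. j \<in> g_deps g b \<and> snd (g_status g b) \<noteq> EXECUTED))"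
definition IL :: "('t \<Rightarrow> ('l,'v) tst) \<Rightarrow> bool" where
  "IL ls \<longleftrightarrow> (\<forall>x. loc (ls x))"
definition IFin :: "('l,'v) gst \<Rightarrow> bool" where
  "IFin g \<longleftrightarrow> (\<forall>b. finite (g_deps g b))"
definition IN :: "('l,'v) gst \<Rightarrow> ('t \<Rightarrow> ('l,'v) tst) \<Rightarrow> bool" where
  "IN g ls \<longleftrightarrow> finite {x. act (ls x)} \<and> g_nact g = int (card {x. act (ls x)})"
definition ICD :: "nat \<Rightarrow> ('l,'v) gst \<Rightarrow> ('t \<Rightarrow> ('l,'v) tst) \<Rightarrow> bool" where
  "ICD n g ls \<longleftrightarrow> (\<forall>x. cdi n g ls (ls x))"
definition IDn :: "nat \<Rightarrow> ('l,'v) gst \<Rightarrow> ('t \<Rightarrow> ('l,'v) tst) \<Rightarrow> bool" where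
  "IDn n g ls \<longleftrightarrow> (g_done g \<longrightarrow> Safe n g ls)"

definition INV where
  "INV n g ls \<longleftrightarrow> IR n g ls \<and> IE n g ls \<and> IA n g ls \<and> IL ls \<and> IFin g \<and> IN g ls \<and> ICD n g ls \<and> IDn n g ls"

lemma INV_init: "INV n init_gst (\<lambda>_. Loop None)"
  by (simp add: INV_def IR_def IE_def IA_def IL_def IFin_def IN_def ICD_def IDn_def init_gst_def)

lemma mv_read_err: "mv_read d p k = READ_ERROR b \<Longrightarrow> b < k"
proof -
  assume a: "mv_read d p k = READ_ERROR b"
  let ?ks = "{k'. k' < k \<and> d (p, k') \<noteq> None}"
  have fin: "finite ?ks" by simp
  show ?thesis
  proof (cases "?ks = {}")
    case True then show ?thesis using a by (simp add: mv_read_def)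
  next
    case False
    then have "Max ?ks \<in> ?ks" using fin Max_in by blast
    moreover have "b = Max ?ks" using a False
      by (auto simp: mv_read_def Let_def split: if_splits option.splits entry.splits)
    ultimately show ?thesis by simp
  qed
qed


lemma act_JL[simp]: "act (Joined x) = (x \<noteq> None)" "act (Loop x) = (x \<noteq> None)" by (cases x, auto)+
lemma hl_JL[simp]: "hl n (Joined x) = (x = None)" "hl n (Loop x) = (x = None)" by (cases x, auto)+

lemmas spl = if_splits option.splits list.splits instr.splits read_result.splits task.splits prod.splits

lemma dcnt_mono: "step1 n prog init g s = Some (g', l') \<Longrightarrow> g_dcnt g \<le> g_dcnt g'"
  by (cases s) (auto simp: Let_def split: spl)

lemma step_nact: "step1 n prog init g s = Some (g', l') \<Longrightarrow>
   g_nact g' = g_nact g + (if act l' then 1 else 0) - (if act s then 1 else 0)"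
  by (cases s) (auto simp: Let_def split: spl)

lemma step_eidx: "step1 n prog init g s = Some (g', l') \<Longrightarrow> g_eidx g \<le> g_eidx g' \<or> pe l'"
  by (cases s) (auto simp: Let_def split: spl)

lemma step_vidx: "step1 n prog init g s = Some (g', l') \<Longrightarrow> g_vidx g \<le> g_vidx g' \<or> pv l'"
  by (cases s) (auto simp: Let_def split: spl)

lemma step_pe: "step1 n prog init g s = Some (g', l') \<Longrightarrow> pe s \<Longrightarrow> g_dcnt g' = Suc (g_dcnt g)"
  by (cases s) (auto simp: Let_def split: spl)

lemma step_pv: "step1 n prog init g s = Some (g', l') \<Longrightarrow> pv s \<Longrightarrow> g_dcnt g' = Suc (g_dcnt g)"
  by (cases s) (auto simp: Let_def split: spl)

lemma step_done: "step1 n prog init g s = Some (g', l') \<Longrightarrow> g_done g' \<Longrightarrow> g_done g \<or> s = CD6"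
  by (cases s) (auto simp: Let_def split: spl)

lemma Safe_pres: assumes "Safe n g ls" "step1 n prog init g (ls t) = Some (g', l')"
  shows "Safe n g' (ls(t := l'))"
proof -
  have h: "hl n (ls t)" using assms(1) by (simp add: Safe_def)
  have a: "n \<le> g_eidx g" "n \<le> g_vidx g" "\<forall>j<n. snd (g_status g j) = EXECUTED" "\<forall>x. hl n (ls x)"
    using assms(1) by (auto simp: Safe_def)
  have "n \<le> g_eidx g' \<and> n \<le> g_vidx g' \<and> (\<forall>j<n. snd (g_status g' j) = EXECUTED) \<and> hl n l'"
    using h a assms(2) by (cases "ls t") (auto simp: Let_def split: spl)
  then show ?thesis using a by (auto simp: Safe_def)
qed


lemma resp_act: "rr s j \<Longrightarrow> act s" "re s j \<Longrightarrow> act s" "ra D s j \<Longrightarrow> act s"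
   "pe s \<Longrightarrow> act s" "pv s \<Longrightarrow> act s" "\<not> act s \<Longrightarrow> hl n s"
  by (cases s rule: act.cases; auto)+

lemma quiescent:
  assumes "IR n g ls" "IE n g ls" "IA n g ls" "n \<le> g_eidx g" "\<forall>x. \<not> act (ls x)"
  shows "\<forall>j<n. snd (g_status g j) = EXECUTED"
proof -
  have "j < n \<longrightarrow> snd (g_status g j) = EXECUTED" for j
  proof (induction j rule: less_induct)
    case (less j)
    show ?case
    proof
      assume jn: "j < n"
      show "snd (g_status g j) = EXECUTED"
      proof (cases "snd (g_status g j)")
        case READY_TO_EXECUTE
        then show ?thesis using assms(1,4,5) jn resp_act(1) unfolding IR_def by fastforce
      next
        case EXECUTING
        then show ?thesis using assms(2,5) jn resp_act(2) unfolding IE_def by blast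
      next
        case EXECUTED then show ?thesis .
      next
        case ABORTING
        then have "(\<exists>x. ra (g_deps g) (ls x) j) \<or> (\<exists>b<j. j \<in> g_deps g b \<and> snd (g_status g b) \<noteq> EXECUTED)"
          using assms(3) jn unfolding IA_def by blast
        then show ?thesis using assms(5) resp_act(3) less jn by (meson order.strict_trans)
      qed
    qed
  qed
  then show ?thesis by blast
qed

lemma IN_pres:
  assumes "IN g ls" "step1 n prog init g (ls t) = Some (g', l')"
  shows "IN g' (ls(t := l'))"
proof -
  let ?A = "{x. act (ls x)}" and ?B = "{x. act ((ls(t := l')) x)}"
  have fA: "finite ?A" and nA: "g_nact g = int (card ?A)" using assms(1) by (auto simp: IN_def)
  have nn: "g_nact g' = g_nact g + (if act l' then 1 else 0) - (if act (ls t) then 1 else 0)"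
    using step_nact[OF assms(2)] .
  have B: "?B = (if act l' then insert t (?A - {t}) else ?A - {t})" by auto
  have fB: "finite ?B" using fA B by auto
  have "int (card ?B) = int (card ?A) + (if act l' then 1 else 0) - (if act (ls t) then 1 else 0)"
  proof (cases "act l'"; cases "act (ls t)")
    assume a: "act l'" "act (ls t)"
    then have "?B = ?A" using B by auto
    then show ?thesis using a by simp
  next
    assume a: "act l'" "\<not> act (ls t)"
    then have "?B = insert t ?A" "t \<notin> ?A" using B by auto
    then show ?thesis using a fA by simp
  next
    assume a: "\<not> act l'" "act (ls t)"
    then have "?B = ?A - {t}" "t \<in> ?A" using B by auto
    moreover have "card ?A > 0" using a fA card_gt_0_iff by blast
    ultimately show ?thesis using a fA by (simp add: card_Diff_singleton of_nat_diff)
  next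
    assume a: "\<not> act l'" "\<not> act (ls t)"
    then have "?B = ?A" using B by auto
    then show ?thesis using a by simp
  qed
  then show ?thesis using fB nA nn by (simp add: IN_def)
qed

lemma IN_zero: "IN g ls \<Longrightarrow> g_nact g = 0 \<Longrightarrow> \<forall>x. \<not> act (ls x)"
  by (auto simp: IN_def)

lemma ex_upd_old: "(\<exists>y. P (ls y)) \<Longrightarrow> \<not> P (ls t) \<Longrightarrow> \<exists>y. P ((ls(t := l')) y)"
  by (metis fun_upd_apply)

lemma ex_upd_new: "P l' \<Longrightarrow> \<exists>y. P ((ls(t := l')) y)"
  by (metis fun_upd_same)

lemma Safe_hl: "Safe n g ls \<Longrightarrow> hl n l' \<Longrightarrow> Safe n g (ls(t := l'))"
  by (auto simp: Safe_def)

lemma disj_upd: "a \<le> b \<or> (\<exists>y. P (ls y)) \<Longrightarrow> \<not> P (ls t) \<Longrightarrow> b \<le> b' \<or> P l'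
   \<Longrightarrow> a \<le> (b'::nat) \<or> (\<exists>y. P ((ls(t := l')) y))"
  by (metis fun_upd_apply order_trans)

lemma cdi_other:
  assumes c: "cdi n g ls s" and st: "step1 n prog init g (ls t) = Some (g', l')"
  shows "cdi n g' (ls(t := l')) s"
proof -
  have m: "g_dcnt g \<le> g_dcnt g'" by (rule dcnt_mono[OF st])
  have pe: "g_dcnt g' = c \<Longrightarrow> c \<le> g_dcnt g \<Longrightarrow> g_dcnt g = c \<and> \<not> pe (ls t) \<and> \<not> pv (ls t)" for c
    using m step_pe[OF st] step_pv[OF st] by fastforce
  have E: "g_eidx g \<le> g_eidx g' \<or> pe l'" by (rule step_eidx[OF st])
  have V: "g_vidx g \<le> g_vidx g' \<or> pv l'" by (rule step_vidx[OF st])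
  show ?thesis
  proof (cases s)
    case (CD2 c) then show ?thesis using c m by auto
  next
    case (CD3 c e)
    show ?thesis unfolding CD3 cdi.simps
    proof (intro conjI impI)
      show "c \<le> g_dcnt g'" using c m CD3 by auto
      assume "g_dcnt g' = c"
      then have a: "g_dcnt g = c" "\<not> pe (ls t)" using pe c CD3 by auto
      then have "e \<le> g_eidx g \<or> (\<exists>y. pe (ls y))" using c CD3 by auto
      then show "e \<le> g_eidx g' \<or> (\<exists>y. pe ((ls(t := l')) y))"
        using E a disj_upd by metis
    qed
  next
    case (CD4 c)
    show ?thesis unfolding CD4 cdi.simps
    proof (intro conjI impI)
      show "c \<le> g_dcnt g'" using c m CD4 by auto
      assume "g_dcnt g' = c"
      then have a: "g_dcnt g = c" "\<not> pe (ls t)" "\<not> pv (ls t)" using pe c CD4 by auto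
      then have "n \<le> g_eidx g \<or> (\<exists>y. pe (ls y))" "n \<le> g_vidx g \<or> (\<exists>y. pv (ls y))" using c CD4 by auto
      then show "n \<le> g_eidx g' \<or> (\<exists>y. pe ((ls(t := l')) y))"
                "n \<le> g_vidx g' \<or> (\<exists>y. pv ((ls(t := l')) y))"
        using E V a disj_upd by metis+
    qed
  next
    case (CD5 c)
    show ?thesis unfolding CD5 cdi.simps
    proof (intro conjI impI)
      show "c \<le> g_dcnt g'" using c m CD5 by auto
      assume "g_dcnt g' = c"
      then have a: "g_dcnt g = c" using pe c CD5 by auto
      then have "Safe n g ls" using c CD5 by auto
      then show "Safe n g' (ls(t := l'))" by (rule Safe_pres[where ls=ls and t=t, OF _ st])
    qed
  next
    case CD6 then show ?thesis using c Safe_pres[where ls=ls and t=t, OF _ st] by auto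
  qed auto
qed



lemma cdi_self:
  assumes inv: "INV n g ls" and st: "step1 n prog init g (ls t) = Some (g', l')"
  shows "cdi n g' (ls(t := l')) l'"
proof -
  have ct: "cdi n g ls (ls t)" using inv by (auto simp: INV_def ICD_def)
  show ?thesis
  proof (cases "ls t")
    case (CD2 c) then show ?thesis using st ct by auto
  next
    case (CD3 c e)
    show ?thesis
    proof (cases "min e (g_vidx g) \<ge> n")
      case True
      then have gl: "g' = g" "l' = CD4 c" using st CD3 by auto
      have np: "\<not> pe (ls t)" using CD3 by simp
      have "g_dcnt g = c \<longrightarrow> (n \<le> g_eidx g \<or> (\<exists>y. pe (ls y)))"
        using ct CD3 True by auto
      then have "g_dcnt g = c \<longrightarrow> (n \<le> g_eidx g \<or> (\<exists>y. pe ((ls(t := l')) y)))"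
        using disj_upd[of n "g_eidx g" pe ls t "g_eidx g" l'] np by auto
      then show ?thesis using gl True ct CD3 by auto
    next
      case False then show ?thesis using st CD3 by auto
    qed
  next
    case (CD4 c)
    show ?thesis
    proof (cases "g_nact g = 0")
      case True
      then have gl: "g' = g" "l' = CD5 c" using st CD4 by auto
      have na: "\<forall>x. \<not> act (ls x)" using IN_zero True inv by (auto simp: INV_def)
      then have npe: "\<forall>y. \<not> pe (ls y)" "\<forall>y. \<not> pv (ls y)" using resp_act by blast+
      have "g_dcnt g = c \<longrightarrow> Safe n g (ls(t := l'))"
      proof
        assume dc: "g_dcnt g = c"
        then have ev: "n \<le> g_eidx g" "n \<le> g_vidx g" using ct CD4 npe by auto
        have "\<forall>j<n. snd (g_status g j) = EXECUTED"
          using quiescent[OF _ _ _ ev(1) na] inv by (auto simp: INV_def)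
        moreover have "\<forall>x. hl n ((ls(t := l')) x)" using na resp_act(6) gl by auto
        ultimately show "Safe n g (ls(t := l'))" using ev by (auto simp: Safe_def)
      qed
      then show ?thesis using gl ct CD4 by auto
    next
      case False then show ?thesis using st CD4 by auto
    qed
  next
    case (CD5 c)
    show ?thesis
    proof (cases "g_dcnt g = c")
      case True
      then have gl: "g' = g" "l' = CD6" using st CD5 by auto
      have "Safe n g ls" using ct CD5 True by auto
      then show ?thesis using gl Safe_hl by fastforce
    next
      case False then show ?thesis using st CD5 by auto
    qed
  qed (use st in \<open>auto simp: Let_def split: spl\<close>)
qed

lemma ICD_pres:
  assumes inv: "INV n g ls" and st: "step1 n prog init g (ls t) = Some (g', l')"
  shows "ICD n g' (ls(t := l'))"
  unfolding ICD_def
proof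
  fix x
  show "cdi n g' (ls(t := l')) ((ls(t := l')) x)"
  proof (cases "x = t")
    case True then show ?thesis using cdi_self[OF inv st] by simp
  next
    case False
    have "cdi n g ls (ls x)" using inv by (auto simp: INV_def ICD_def)
    then show ?thesis using cdi_other[where ls=ls and t=t, OF _ st] False by simp
  qed
qed

lemma IDn_pres:
  assumes inv: "INV n g ls" and st: "step1 n prog init g (ls t) = Some (g', l')"
  shows "IDn n g' (ls(t := l'))"
  unfolding IDn_def
proof
  assume d: "g_done g'"
  have "Safe n g ls"
  proof (cases "g_done g")
    case True then show ?thesis using inv by (auto simp: INV_def IDn_def)
  next
    case False
    then have "ls t = CD6" using step_done[OF st d] by auto
    then show ?thesis using inv by (auto simp: INV_def ICD_def) (metis cdi.simps(5))
  qed
  then show "Safe n g' (ls(t := l'))" by (rule Safe_pres[where ls=ls and t=t, OF _ st])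
qed


lemma IL_pres:
  assumes inv: "INV n g ls" and st: "step1 n prog init g (ls t) = Some (g', l')"
  shows "IL (ls(t := l'))"
proof -
  have l: "loc (ls t)" using inv by (auto simp: INV_def IL_def)
  have f: "\<forall>b. finite (g_deps g b)" using inv by (auto simp: INV_def IFin_def)
  have "loc l'" using l f st
    by (cases "ls t") (auto simp: Let_def split: spl dest: mv_read_err)
  then show ?thesis using inv by (auto simp: INV_def IL_def)
qed

lemma IFin_pres:
  assumes inv: "INV n g ls" and st: "step1 n prog init g (ls t) = Some (g', l')"
  shows "IFin g'"
proof -
  have f: "\<forall>b. finite (g_deps g b)" using inv by (auto simp: INV_def IFin_def)
  show ?thesis using f st unfolding IFin_def
    by (cases "ls t") (auto simp: Let_def split: spl)
qed



lemma IR_step: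
  assumes st: "step1 n prog init g s = Some (g', l')" and l: "loc s" and D: "g_done g \<longrightarrow> hl n s"
    and r: "snd (g_status g' j) = READY_TO_EXECUTE" and j: "j < n"
  shows "g_eidx g' \<le> j \<or> rr l' j \<or> (snd (g_status g j) = READY_TO_EXECUTE \<and> \<not> g_eidx g \<le> j \<and> \<not> rr s j)"
  using st l D r j by (cases s) (auto simp: Let_def split: spl)

lemma IE_step:
  assumes st: "step1 n prog init g s = Some (g', l')" and D: "g_done g \<longrightarrow> hl n s"
    and r: "snd (g_status g' j) = EXECUTING" and j: "j < n"
  shows "re l' j \<or> (snd (g_status g j) = EXECUTING \<and> \<not> re s j)"
  using st D r j by (cases s) (auto simp: Let_def split: spl)


lemma IA_step_a:
  assumes st: "step1 n prog init g s = Some (g', l')" and l: "loc s" and D: "g_done g \<longrightarrow> hl n s"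
    and ns: "\<not> (\<exists>k i w. s = FE_Swap k i w)"
    and r: "snd (g_status g' j) = ABORTING" and j: "j < n"
  shows "ra (g_deps g') l' j \<or> (snd (g_status g j) = ABORTING \<and> \<not> ra (g_deps g) s j)
     \<or> (\<exists>b0 k i. s = EX_Dep k i b0 \<and> j = k \<and> b0 < j \<and> j \<in> g_deps g' b0 \<and> snd (g_status g' b0) \<noteq> EXECUTED)"
  using st l D ns r j by (cases s) (auto simp: Let_def split: spl)

lemma IA_step_b:
  assumes st: "step1 n prog init g s = Some (g', l')"
    and ns: "\<not> (\<exists>k i w. s = FE_Swap k i w)"
    and b: "j \<in> g_deps g b" "snd (g_status g b) \<noteq> EXECUTED"
  shows "(j \<in> g_deps g' b \<and> snd (g_status g' b) \<noteq> EXECUTED) \<or> ra (g_deps g') l' j"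
  using st ns b by (cases s) (auto simp: Let_def split: spl)

lemma ex_split: "(\<exists>x. P (ls x)) \<Longrightarrow> P (ls t) \<or> (\<exists>x. x \<noteq> t \<and> P (ls x))"
  by (elim exE, case_tac "x = t") auto

lemma ex_fold: "P l' \<or> (\<exists>x. x \<noteq> t \<and> P (ls x)) \<Longrightarrow> \<exists>x. P ((ls(t := l')) x)"
proof (elim disjE exE conjE)
  assume "P l'" then show ?thesis by (intro exI[of _ t]) simp
next
  fix x assume "x \<noteq> t" "P (ls x)" then show ?thesis by (intro exI[of _ x]) simp
qed

lemma IR_pres:
  assumes inv: "INV n g ls" and st: "step1 n prog init g (ls t) = Some (g', l')"
  shows "IR n g' (ls(t := l'))"
  unfolding IR_def
proof (intro allI impI)
  fix j assume j: "j < n" "snd (g_status g' j) = READY_TO_EXECUTE"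
  have H: "snd (g_status g j) = READY_TO_EXECUTE \<longrightarrow> g_eidx g \<le> j \<or> rr (ls t) j \<or> (\<exists>x. x \<noteq> t \<and> rr (ls x) j)"
  proof -
    have "\<forall>j<n. snd (g_status g j) = READY_TO_EXECUTE \<longrightarrow> g_eidx g \<le> j \<or> (\<exists>x. rr (ls x) j)"
      using inv by (simp add: INV_def IR_def)
    then have "snd (g_status g j) = READY_TO_EXECUTE \<longrightarrow> g_eidx g \<le> j \<or> (\<exists>x. rr (ls x) j)"
      using j(1) by blast
    then show ?thesis using ex_split[of "\<lambda>s. rr s j" ls t] by blast
  qed
  have l: "loc (ls t)" using inv by (auto simp: INV_def IL_def)
  have D: "g_done g \<longrightarrow> hl n (ls t)" using inv by (auto simp: INV_def IDn_def Safe_def)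
  have "g_eidx g' \<le> j \<or> rr l' j \<or> (\<exists>x. x \<noteq> t \<and> rr (ls x) j)"
    using IR_step[OF st l D j(2) j(1)] H by blast
  then show "g_eidx g' \<le> j \<or> (\<exists>x. rr ((ls(t := l')) x) j)" using ex_fold[of "\<lambda>s. rr s j" l' t ls] by blast
qed

lemma IE_pres:
  assumes inv: "INV n g ls" and st: "step1 n prog init g (ls t) = Some (g', l')"
  shows "IE n g' (ls(t := l'))"
  unfolding IE_def
proof (intro allI impI)
  fix j assume j: "j < n" "snd (g_status g' j) = EXECUTING"
  have H: "snd (g_status g j) = EXECUTING \<longrightarrow> re (ls t) j \<or> (\<exists>x. x \<noteq> t \<and> re (ls x) j)"
  proof -
    have "\<forall>j<n. snd (g_status g j) = EXECUTING \<longrightarrow> (\<exists>x. re (ls x) j)"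
      using inv by (simp add: INV_def IE_def)
    then have "snd (g_status g j) = EXECUTING \<longrightarrow> (\<exists>x. re (ls x) j)"
      using j(1) by blast
    then show ?thesis using ex_split[of "\<lambda>s. re s j" ls t] by blast
  qed
  have D: "g_done g \<longrightarrow> hl n (ls t)" using inv by (auto simp: INV_def IDn_def Safe_def)
  have "re l' j \<or> (\<exists>x. x \<noteq> t \<and> re (ls x) j)"
    using IE_step[OF st D j(2) j(1)] H by blast
  then show "\<exists>x. re ((ls(t := l')) x) j" using ex_fold[of "\<lambda>s. re s j" l' t ls] by blast
qed

lemma ra_mono: "ra D s j \<Longrightarrow> (\<forall>b. j \<in> D b \<longrightarrow> j \<in> D' b) \<Longrightarrow> ra D' s j"
  by (cases "(D, s, j)" rule: ra.cases) auto

lemma deps_step: "step1 n prog init g s = Some (g', l') \<Longrightarrow>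
   (\<forall>b. g_deps g b \<subseteq> g_deps g' b) \<or> (\<exists>k i w. s = FE_Swap k i w)"
  by (cases s) (auto simp: Let_def split: spl)

lemma IA_pres:
  assumes inv: "INV n g ls" and st: "step1 n prog init g (ls t) = Some (g', l')"
  shows "IA n g' (ls(t := l'))"
  unfolding IA_def
proof (intro allI impI)
  fix j assume j: "j < n" "snd (g_status g' j) = ABORTING"
  have H: "snd (g_status g j) = ABORTING \<longrightarrow> ra (g_deps g) (ls t) j \<or> (\<exists>x. x \<noteq> t \<and> ra (g_deps g) (ls x) j)
     \<or> (\<exists>b<j. j \<in> g_deps g b \<and> snd (g_status g b) \<noteq> EXECUTED)"
  proof -
    have "\<forall>j<n. snd (g_status g j) = ABORTING \<longrightarrow>
      (\<exists>x. ra (g_deps g) (ls x) j) \<or> (\<exists>b<j. j \<in> g_deps g b \<and> snd (g_status g b) \<noteq> EXECUTED)"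
      using inv by (simp add: INV_def IA_def)
    then have "snd (g_status g j) = ABORTING \<longrightarrow>
      (\<exists>x. ra (g_deps g) (ls x) j) \<or> (\<exists>b<j. j \<in> g_deps g b \<and> snd (g_status g b) \<noteq> EXECUTED)"
      using j(1) by blast
    then show ?thesis using ex_split[of "\<lambda>s. ra (g_deps g) s j" ls t] by blast
  qed
  have f: "\<forall>b. finite (g_deps g b)" using inv by (auto simp: INV_def IFin_def)
  have l: "loc (ls t)" using inv by (auto simp: INV_def IL_def)
  have D: "g_done g \<longrightarrow> hl n (ls t)" using inv by (auto simp: INV_def IDn_def Safe_def)
  have "ra (g_deps g') l' j \<or> (\<exists>x. x \<noteq> t \<and> ra (g_deps g') (ls x) j)
     \<or> (\<exists>b<j. j \<in> g_deps g' b \<and> snd (g_status g' b) \<noteq> EXECUTED)"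
  proof (cases "\<exists>k i w. ls t = FE_Swap k i w")
    case True
    then obtain k i w where sw: "ls t = FE_Swap k i w" by blast
    then have gl: "g' = g\<lparr>g_deps := (g_deps g)(k := {})\<rparr>"
      "l' = FE_Res k i w (sorted_list_of_set (g_deps g k)) (if g_deps g k = {} then None else Some (Min (g_deps g k)))"
      using st by (auto simp: Let_def)
    show ?thesis
    proof (cases "j \<in> g_deps g k")
      case True then show ?thesis using gl f by auto
    next
      case False
      then have m: "\<forall>b. j \<in> g_deps g b \<longrightarrow> j \<in> g_deps g' b" using gl by auto
      have a: "snd (g_status g j) = ABORTING" using j gl by simp
      have "\<not> ra (g_deps g) (ls t) j" using sw False by simp
      then have "(\<exists>x. x \<noteq> t \<and> ra (g_deps g) (ls x) j) \<or> (\<exists>b<j. j \<in> g_deps g b \<and> snd (g_status g b) \<noteq> EXECUTED)"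
        using H a by blast
      then show ?thesis
      proof (elim disjE)
        assume "\<exists>x. x \<noteq> t \<and> ra (g_deps g) (ls x) j"
        then have "\<exists>x. x \<noteq> t \<and> ra (g_deps g') (ls x) j" using m ra_mono[of "g_deps g" _ j "g_deps g'"] by blast
        then show ?thesis by blast
      next
        assume "\<exists>b<j. j \<in> g_deps g b \<and> snd (g_status g b) \<noteq> EXECUTED"
        then obtain b where "b < j" "j \<in> g_deps g b" "snd (g_status g b) \<noteq> EXECUTED" by blast
        moreover have "g_status g' = g_status g" using gl by simp
        ultimately have "b < j \<and> j \<in> g_deps g' b \<and> snd (g_status g' b) \<noteq> EXECUTED" using m by simp
        then show ?thesis by blast
      qed
    qed
  next
    case False
    then have m: "\<forall>b. g_deps g b \<subseteq> g_deps g' b" using deps_step[OF st] by blast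
    have S: "ra (g_deps g') l' j \<or> (\<exists>b<j. j \<in> g_deps g' b \<and> snd (g_status g' b) \<noteq> EXECUTED)
     \<or> (snd (g_status g j) = ABORTING \<and> \<not> ra (g_deps g) (ls t) j)"
      using IA_step_a[OF st l D False j(2) j(1)] by blast
    have T: "\<And>b. j \<in> g_deps g b \<Longrightarrow> snd (g_status g b) \<noteq> EXECUTED \<Longrightarrow>
       (j \<in> g_deps g' b \<and> snd (g_status g' b) \<noteq> EXECUTED) \<or> ra (g_deps g') l' j"
      using IA_step_b[OF st False] by blast
    have O: "(\<exists>x. x \<noteq> t \<and> ra (g_deps g) (ls x) j) \<Longrightarrow> (\<exists>x. x \<noteq> t \<and> ra (g_deps g') (ls x) j)"
      using m ra_mono[of "g_deps g" _ j "g_deps g'"] by blast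
    show ?thesis using S H O T by blast
  qed
  then show "(\<exists>x. ra (g_deps g') ((ls(t := l')) x) j) \<or> (\<exists>b<j. j \<in> g_deps g' b \<and> snd (g_status g' b) \<noteq> EXECUTED)"
    using ex_fold[of "\<lambda>s. ra (g_deps g') s j" l' t ls] by blast
qed

lemma INV_pres:
  assumes inv: "INV n g ls" and st: "step1 n prog init g (ls t) = Some (g', l')"
  shows "INV n g' (ls(t := l'))"
  using IR_pres[OF inv st] IE_pres[OF inv st] IA_pres[OF inv st] IL_pres[OF inv st]
    IFin_pres[OF inv st] IN_pres[where ls=ls and t=t, OF _ st] ICD_pres[OF inv st] IDn_pres[OF inv st] inv
  by (auto simp: INV_def)

lemma reach_INV: "reachable n prog init C \<Longrightarrow> INV n (fst C) (snd C)"
  unfolding reachable_def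
proof (induction rule: rtranclp_induct)
  case base then show ?case using INV_init by (simp add: init_conf_def)
next
  case (step y z)
  then obtain t g' l' where st: "step1 n prog init (fst y) (snd y t) = Some (g', l')"
    and z: "z = (g', (snd y)(t := l'))"
    by (auto simp: bstep_def)
  have "INV n g' ((snd y)(t := l'))" by (rule INV_pres[where ls="snd y" and t=t, OF step.IH st])
  then show ?case using z by (metis fst_conv snd_conv)
qed

lemma hl_ongoing: "hl n s \<Longrightarrow> ongoing s = Some j \<Longrightarrow> n \<le> j"
  by (cases s) auto

lemma Safe_gci: "Safe n g ls \<Longrightarrow> n \<le> global_commit_index n (g, ls)"
  unfolding global_commit_index_def
  apply (rule cInf_greatest)
   apply blast
  apply (auto simp: Safe_def dest: hl_ongoing)
  done

theorem mainTheorem3: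
  fixes n :: nat
    and prog :: "nat \<Rightarrow> 'v option list \<Rightarrow> ('l, 'v) instr"
    and init :: "'l \<Rightarrow> 'v"
    and t :: 't
    and C C' :: "('l, 'v, 't) conf"
  assumes "reachable n prog init C"
    and "bstep n prog init t C C'"
    and "\<not> is_joined (snd C t)"
    and "is_joined (snd C' t)"
  shows "\<forall>k < n. globally_committed n C' k"
proof -
  have inv: "INV n (fst C) (snd C)" using reach_INV assms(1) .
  obtain g' l' where st: "step1 n prog init (fst C) (snd C t) = Some (g', l')"
    and C': "C' = (g', (snd C)(t := l'))" using assms(2) by (auto simp: bstep_def)
  have j: "is_joined l'" using assms(4) C' by simp
  have "\<exists>x. snd C t = Loop x \<and> g_done (fst C) \<and> g' = fst C \<and> l' = Joined x"
    using st j assms(3) by (cases "snd C t") (auto simp: Let_def split: spl)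
  then obtain x where x: "snd C t = Loop x" "g_done (fst C)" "g' = fst C" "l' = Joined x" by blast
  have S: "Safe n (fst C) (snd C)" using inv x(2) by (auto simp: INV_def IDn_def)
  then have "x = None" using x(1) by (auto simp: Safe_def) (metis hl_JL(2))
  then have "Safe n g' ((snd C)(t := l'))" using S x Safe_hl[where ls="snd C" and t=t] by simp
  then have "n \<le> global_commit_index n C'" using Safe_gci C' by simp
  then show ?thesis by (auto simp: globally_committed_def)
qed

end
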